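(* Existential second-order universal Horn logic does not capture the complexity class $\mathbf{P}$, even when restricted to finite input structures whose vocabulary includes a successor relation: there is a decision problem on such structures that is decidable in polynomial time but is not expressible by any ESO universal Horn sentence.
   Context: ESO universal Horn logic consists of sentences of the form $\exists S_1 \cdots \exists S_m\, \forall \bar{x}\, \psi$, where $S_1,\dots,S_m$ are second-order (relation) variables and $\forall \bar x\,\psi$ is a universal first-order formula whose matrix $\psi$ is a conjunction of Horn clauses with respect to the quantified relations $S_i$ (each clause contains at most one positive occurrence of an atom built from an $S_i$; atoms and negated atoms over the input vocabulary are unrestricted). A decision problem (a class of finite structures over a fixed input vocabulary) is expressed by such a sentence if a finite input structure is a yes-instance exactly when it satisfies the sentence. A successor relation is a binary relation in the input vocabulary interpreted as the successor relation of a linear order on the universe. $\mathbf{P}$ is the class of problems decidable in polynomial time. *)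

theory Defs
  imports Main
begin

text \<open>A vocabulary is a list of arities; relation symbol i has arity ar!i.
  A fstruct is a pair (n, rels): universe {0..<n} (n > 0) and rels i the
  interpretation of symbol i, a set of tuples (lists) of length ar!i.\<close>

type_synonym fstruct = "nat \<times> (nat \<Rightarrow> nat list set)"

definition univ :: "fstruct \<Rightarrow> nat" where "univ A = fst A"
definition rel :: "fstruct \<Rightarrow> nat \<Rightarrow> nat list set" where "rel A = snd A"

definition tuples :: "nat \<Rightarrow> nat \<Rightarrow> nat list set" where
  "tuples n k = {t. length t = k \<and> set t \<subseteq> {0..<n}}"

definition is_structure :: "nat list \<Rightarrow> fstruct \<Rightarrow> bool" where
  "is_structure ar A \<longleftrightarrow> 0 < univ A \<and>
     (\<forall>i < length ar. rel A i \<subseteq> tuples (univ A) (ar ! i)) \<and>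
     (\<forall>i \<ge> length ar. rel A i = {})"

definition is_successor :: "nat \<Rightarrow> nat list set \<Rightarrow> bool" where
  "is_successor n R \<longleftrightarrow> (\<exists>f. bij_betw f {0..<n} {0..<n} \<and>
      R = {[f i, f (Suc i)] | i. Suc i < n})"

definition succ_structure :: "nat list \<Rightarrow> nat \<Rightarrow> fstruct \<Rightarrow> bool" where
  "succ_structure ar s A \<longleftrightarrow> is_structure ar A \<and> is_successor (univ A) (rel A s)"

definition isomorphic :: "nat list \<Rightarrow> fstruct \<Rightarrow> fstruct \<Rightarrow> bool" where
  "isomorphic ar A B \<longleftrightarrow> univ A = univ B \<and>
     (\<exists>f. bij_betw f {0..<univ A} {0..<univ B} \<and>
          (\<forall>i < length ar. rel B i = map f ` rel A i))"

definition decision_problem :: "nat list \<Rightarrow> nat \<Rightarrow> fstruct set \<Rightarrow> bool" where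
  "decision_problem ar s \<Pi> \<longleftrightarrow>
     (\<forall>A \<in> \<Pi>. succ_structure ar s A) \<and>
     (\<forall>A B. A \<in> \<Pi> \<longrightarrow> succ_structure ar s B \<longrightarrow> isomorphic ar A B \<longrightarrow> B \<in> \<Pi>)"

fun enum_tuples :: "nat \<Rightarrow> nat \<Rightarrow> nat list list" where
  "enum_tuples n 0 = [[]]"
| "enum_tuples n (Suc k) = concat (map (\<lambda>i. map (Cons i) (enum_tuples n k)) [0..<n])"

definition encode :: "nat list \<Rightarrow> fstruct \<Rightarrow> bool list" where
  "encode ar A = replicate (univ A) True @ [False] @
     concat (map (\<lambda>i. map (\<lambda>t. t \<in> rel A i) (enum_tuples (univ A) (ar ! i))) [0..<length ar])"

datatype dir = Lft | Rgt | Stay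

text \<open>Transition function: state \<Rightarrow> read symbol \<Rightarrow> (new state, written symbol, move).
  State 0 is initial, 1 accepting, 2 rejecting (1 and 2 halt).
  Symbol 0 is blank, input bit False is symbol 1, True is symbol 2.
  The tape is one-way infinite (cells nat); moving left at cell 0 stays.\<close>
type_synonym tm = "nat \<Rightarrow> nat \<Rightarrow> nat \<times> nat \<times> dir"
type_synonym config = "nat \<times> (nat \<Rightarrow> nat) \<times> nat"

definition tm_finite :: "nat \<Rightarrow> nat \<Rightarrow> tm \<Rightarrow> bool" where
  "tm_finite Q K \<delta> \<longleftrightarrow> 3 \<le> Q \<and> 3 \<le> K \<and>
     (\<forall>q < Q. \<forall>a < K. fst (\<delta> q a) < Q \<and> fst (snd (\<delta> q a)) < K)"

fun move :: "dir \<Rightarrow> nat \<Rightarrow> nat" where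
  "move Lft h = h - 1"
| "move Rgt h = Suc h"
| "move Stay h = h"

definition tm_step :: "tm \<Rightarrow> config \<Rightarrow> config" where
  "tm_step \<delta> c = (case c of (q, tp, h) \<Rightarrow>
     if q = 1 \<or> q = 2 then (q, tp, h)
     else (case \<delta> q (tp h) of (q', a, d) \<Rightarrow> (q', tp(h := a), move d h)))"

definition tm_init :: "bool list \<Rightarrow> config" where
  "tm_init w = (0, (\<lambda>i. if i < length w then (if w ! i then 2 else 1) else 0), 0)"

definition tm_run :: "tm \<Rightarrow> bool list \<Rightarrow> nat \<Rightarrow> config" where
  "tm_run \<delta> w t = (tm_step \<delta> ^^ t) (tm_init w)"

definition poly_time_decides :: "tm \<Rightarrow> bool list set \<Rightarrow> bool" where
  "poly_time_decides \<delta> L \<longleftrightarrow> (\<exists>c k::nat. \<forall>w. \<exists>t. t \<le> c * length w ^ k + c \<and>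
      fst (tm_run \<delta> w t) \<in> {1, 2} \<and> (fst (tm_run \<delta> w t) = 1 \<longleftrightarrow> w \<in> L))"

definition in_P :: "bool list set \<Rightarrow> bool" where
  "in_P L \<longleftrightarrow> (\<exists>Q K \<delta>. tm_finite Q K \<delta> \<and> poly_time_decides \<delta> L)"

definition problem_in_P :: "nat list \<Rightarrow> fstruct set \<Rightarrow> bool" where
  "problem_in_P ar \<Pi> \<longleftrightarrow> in_P (encode ar ` \<Pi>)"

text \<open>Atoms: input relation i applied to first-order variables, second-order
  variable j applied to first-order variables, equality of variables.\<close>
datatype atom = InRel nat "nat list" | SoRel nat "nat list" | Eq nat nat
datatype lit = Pos atom | Neg atom

text \<open>ESOUH sar k M: \<exists>S_0..S_(m-1) (arities sar) \<forall>x_0..x_(k-1). \<And> clauses M,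
  each clause a disjunction of literals.\<close>
datatype esouh = ESOUH "nat list" nat "lit list list"

fun wf_atom :: "nat list \<Rightarrow> nat list \<Rightarrow> nat \<Rightarrow> atom \<Rightarrow> bool" where
  "wf_atom ar sar k (InRel i xs) \<longleftrightarrow> i < length ar \<and> length xs = ar ! i \<and> (\<forall>x \<in> set xs. x < k)"
| "wf_atom ar sar k (SoRel j xs) \<longleftrightarrow> j < length sar \<and> length xs = sar ! j \<and> (\<forall>x \<in> set xs. x < k)"
| "wf_atom ar sar k (Eq x y) \<longleftrightarrow> x < k \<and> y < k"

fun lit_atom :: "lit \<Rightarrow> atom" where
  "lit_atom (Pos a) = a" | "lit_atom (Neg a) = a"

fun so_pos :: "lit \<Rightarrow> bool" where
  "so_pos (Pos (SoRel _ _)) = True"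
| "so_pos _ = False"

definition horn_clause :: "lit list \<Rightarrow> bool" where
  "horn_clause C \<longleftrightarrow> length (filter so_pos C) \<le> 1"

fun esouh_sentence :: "nat list \<Rightarrow> esouh \<Rightarrow> bool" where
  "esouh_sentence ar (ESOUH sar k M) \<longleftrightarrow>
     (\<forall>C \<in> set M. horn_clause C \<and> (\<forall>l \<in> set C. wf_atom ar sar k (lit_atom l)))"

fun eval_atom :: "fstruct \<Rightarrow> (nat \<Rightarrow> nat list set) \<Rightarrow> (nat \<Rightarrow> nat) \<Rightarrow> atom \<Rightarrow> bool" where
  "eval_atom A S v (InRel i xs) \<longleftrightarrow> map v xs \<in> rel A i"
| "eval_atom A S v (SoRel j xs) \<longleftrightarrow> map v xs \<in> S j"
| "eval_atom A S v (Eq x y) \<longleftrightarrow> v x = v y"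

fun eval_lit :: "fstruct \<Rightarrow> (nat \<Rightarrow> nat list set) \<Rightarrow> (nat \<Rightarrow> nat) \<Rightarrow> lit \<Rightarrow> bool" where
  "eval_lit A S v (Pos a) \<longleftrightarrow> eval_atom A S v a"
| "eval_lit A S v (Neg a) \<longleftrightarrow> \<not> eval_atom A S v a"

fun satisfies :: "fstruct \<Rightarrow> esouh \<Rightarrow> bool" where
  "satisfies A (ESOUH sar k M) \<longleftrightarrow>
     (\<exists>S. (\<forall>j < length sar. S j \<subseteq> tuples (univ A) (sar ! j)) \<and>
          (\<forall>v. (\<forall>i < k. v i < univ A) \<longrightarrow>
               (\<forall>C \<in> set M. \<exists>l \<in> set C. eval_lit A S v l)))"

definition expresses :: "nat list \<Rightarrow> nat \<Rightarrow> esouh \<Rightarrow> fstruct set \<Rightarrow> bool" where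
  "expresses ar s \<phi> \<Pi> \<longleftrightarrow> (\<forall>A. succ_structure ar s A \<longrightarrow> (A \<in> \<Pi> \<longleftrightarrow> satisfies A \<phi>))"

end

theory Submission imports Defs begin
definition nxt :: "nat \<Rightarrow> nat \<Rightarrow> nat" where
"nxt q a = (if q=0 \<and> a=2 then 3 else if q=3 \<and> a=2 then 4 else if q=4 \<and> a=1 then 5
  else if q=5 \<and> a=1 then 6 else if q=6 \<and> a=2 then 7 else if q=6 \<and> a=1 then 9
  else if q=7 \<and> a=1 then 8 else if q=8 \<and> a=1 then 11 else if q=9 \<and> a=2 then 10
  else if q=10 \<and> a=1 then 11 else if q=11 \<and> a=0 then 1 else 2)"
definition dlt :: tm where "dlt q a = (nxt q a, 0, Rgt)"

definition w1 :: "bool list" where "w1 = [True,True,False,False,True,False,False]"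
definition w2 :: "bool list" where "w2 = [True,True,False,False,False,True,False]"

lemmas S = tm_run_def tm_init_def tm_step_def dlt_def nxt_def w1_def w2_def numeral_eq_Suc

lemma run9: "fst (tm_run dlt w 9) = (if w = w1 \<or> w = w2 then 1 else 2)"
  proof (cases w)
    case Nil then show ?thesis by (simp add: S)
  next
    case (Cons a0 r0) note c0 = this
    show ?thesis
    proof (cases a0)
      case True note b0 = this
      show ?thesis
      proof (cases r0)
        case Nil with c0 b0 show ?thesis by (simp add: S)
      next
        case (Cons a1 r1) note c1 = this
        show ?thesis
        proof (cases a1)
          case True note b1 = this
          show ?thesis
          proof (cases r1)
            case Nil with c0 b0 c1 b1 show ?thesis by (simp add: S)
          next
            case (Cons a2 r2) note c2 = this
            show ?thesis
            proof (cases a2)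
              case True note b2 = this
              show ?thesis using c0 b0 c1 b1 c2 b2 by (simp add: S)
            next
              case False note b2 = this
              show ?thesis
              proof (cases r2)
                case Nil with c0 b0 c1 b1 c2 b2 show ?thesis by (simp add: S)
              next
                case (Cons a3 r3) note c3 = this
                show ?thesis
                proof (cases a3)
                  case True note b3 = this
                  show ?thesis using c0 b0 c1 b1 c2 b2 c3 b3 by (simp add: S)
                next
                  case False note b3 = this
                  show ?thesis
                  proof (cases r3)
                    case Nil with c0 b0 c1 b1 c2 b2 c3 b3 show ?thesis by (simp add: S)
                  next
                    case (Cons a4 r4) note c4 = this
                    show ?thesis
                    proof (cases a4)
                      case True note b4 = this
                      show ?thesis
                      proof (cases r4)
                        case Nil with c0 b0 c1 b1 c2 b2 c3 b3 c4 b4 show ?thesis by (simp add: S)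
                      next
                        case (Cons a5 r5) note c5 = this
                        show ?thesis
                        proof (cases a5)
                          case True note b5 = this
                          show ?thesis using c0 b0 c1 b1 c2 b2 c3 b3 c4 b4 c5 b5 by (simp add: S)
                        next
                          case False note b5 = this
                          show ?thesis
                          proof (cases r5)
                            case Nil with c0 b0 c1 b1 c2 b2 c3 b3 c4 b4 c5 b5 show ?thesis by (simp add: S)
                          next
                            case (Cons a6 r6) note c6 = this
                            show ?thesis
                            proof (cases a6)
                              case True note b6 = this
                              show ?thesis using c0 b0 c1 b1 c2 b2 c3 b3 c4 b4 c5 b5 c6 b6 by (simp add: S)
                            next
                              case False note b6 = this
                              show ?thesis
                              proof (cases r6)
                                case Nil with c0 b0 c1 b1 c2 b2 c3 b3 c4 b4 c5 b5 c6 b6 show ?thesis by (simp add: S)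
                              next
                                case (Cons a7 r7) note c7 = this
                                show ?thesis using c0 b0 c1 b1 c2 b2 c3 b3 c4 b4 c5 b5 c6 b6 c7 by (simp add: S)
                              qed
                            qed
                          qed
                        qed
                      qed
                    next
                      case False note b4 = this
                      show ?thesis
                      proof (cases r4)
                        case Nil with c0 b0 c1 b1 c2 b2 c3 b3 c4 b4 show ?thesis by (simp add: S)
                      next
                        case (Cons a5 r5) note c5 = this
                        show ?thesis
                        proof (cases a5)
                          case True note b5 = this
                          show ?thesis
                          proof (cases r5)
                            case Nil with c0 b0 c1 b1 c2 b2 c3 b3 c4 b4 c5 b5 show ?thesis by (simp add: S)
                          next
                            case (Cons a6 r6) note c6 = this
                            show ?thesis
                            proof (cases a6)
                              case True note b6 = this
                              show ?thesis using c0 b0 c1 b1 c2 b2 c3 b3 c4 b4 c5 b5 c6 b6 by (simp add: S)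
                            next
                              case False note b6 = this
                              show ?thesis
                              proof (cases r6)
                                case Nil with c0 b0 c1 b1 c2 b2 c3 b3 c4 b4 c5 b5 c6 b6 show ?thesis by (simp add: S)
                              next
                                case (Cons a7 r7) note c7 = this
                                show ?thesis using c0 b0 c1 b1 c2 b2 c3 b3 c4 b4 c5 b5 c6 b6 c7 by (simp add: S)
                              qed
                            qed
                          qed
                        next
                          case False note b5 = this
                          show ?thesis using c0 b0 c1 b1 c2 b2 c3 b3 c4 b4 c5 b5 by (simp add: S)
                        qed
                      qed
                    qed
                  qed
                qed
              qed
            qed
          qed
        next
          case False note b1 = this
          show ?thesis using c0 b0 c1 b1 by (simp add: S)
        qed
      qed
    next
      case False note b0 = this
      show ?thesis using c0 b0 by (simp add: S)
    qed
  qed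


definition A1 :: fstruct where "A1 = (2, \<lambda>i. if i = 0 then {[0,1]} else {})"
definition A2 :: fstruct where "A2 = (2, \<lambda>i. if i = 0 then {[1,0]} else {})"
definition B0 :: fstruct where "B0 = (1, \<lambda>i. {})"
definition PP :: "fstruct set" where "PP = {A. succ_structure [2] 0 A \<and> univ A = 2}"

lemma enc1: "encode [2] A1 = w1"
  by (simp add: encode_def A1_def univ_def rel_def w1_def numeral_eq_Suc upt_rec)
lemma enc2: "encode [2] A2 = w2"
  by (simp add: encode_def A2_def univ_def rel_def w2_def numeral_eq_Suc upt_rec)

lemma tup2: "tuples 2 2 = {[0,0],[0,1],[1,0],[1,1]}"
proof -
  have "t \<in> tuples 2 2 \<longleftrightarrow> t \<in> {[0,0],[0,1],[1,0],[1,1]}" for t :: "nat list"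
  proof
    assume "t \<in> tuples 2 2"
    then obtain a b where t: "t = [a,b]" "a < 2" "b < 2"
      unfolding tuples_def by (auto simp: numeral_eq_Suc length_Suc_conv)
    thus "t \<in> {[0,0],[0,1],[1,0],[1,1]}" by (auto simp: less_2_cases_iff)
  qed (auto simp: tuples_def)
  thus ?thesis by blast
qed

lemma succ_A1: "succ_structure [2] 0 A1"
  unfolding succ_structure_def is_structure_def is_successor_def
proof (intro conjI)
  show "\<exists>f. bij_betw f {0..<univ A1} {0..<univ A1} \<and> rel A1 0 = {[f i, f (Suc i)] |i. Suc i < univ A1}"
    by (rule exI[of _ id]) (auto simp: A1_def univ_def rel_def)
qed (auto simp: A1_def univ_def rel_def tup2)

lemma succ_A2: "succ_structure [2] 0 A2"
  unfolding succ_structure_def is_structure_def is_successor_def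
proof (intro conjI)
  have b: "bij_betw (\<lambda>i::nat. 1 - i) {0..<2} {0..<2}"
    unfolding bij_betw_def inj_on_def
  proof (intro conjI ballI impI)
    show "(\<lambda>i::nat. 1 - i) ` {0..<2} = {0..<2}"
    proof (intro equalityI subsetI)
      fix x :: nat assume "x \<in> {0..<2}"
      hence "x = 1 - (1 - x)" "1 - x \<in> {0..<2}" by auto
      thus "x \<in> (\<lambda>i. 1 - i) ` {0..<2}" by blast
    qed auto
  qed auto
  show "\<exists>f. bij_betw f {0..<univ A2} {0..<univ A2} \<and> rel A2 0 = {[f i, f (Suc i)] |i. Suc i < univ A2}"
  proof (rule exI[of _ "\<lambda>i. 1 - i"], rule conjI)
    show "bij_betw (\<lambda>i::nat. 1 - i) {0..<univ A2} {0..<univ A2}" using b by (simp add: A2_def univ_def)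
  qed (auto simp: A2_def univ_def rel_def)
qed (auto simp: A2_def univ_def rel_def tup2)

lemma succ_B0: "succ_structure [2] 0 B0"
  unfolding succ_structure_def is_structure_def is_successor_def
  by (auto simp: B0_def univ_def rel_def intro!: exI[of _ id])

lemma PP_cases: assumes "A \<in> PP" shows "A = A1 \<or> A = A2"
proof -
  from assms have s: "is_structure [2] A" "is_successor 2 (rel A 0)" and u: "univ A = 2"
    by (auto simp: PP_def succ_structure_def)
  from s(2) obtain f where f: "bij_betw f {0..<2} {0..<2}" and R: "rel A 0 = {[f i, f (Suc i)] |i. Suc i < 2}"
    unfolding is_successor_def by blast
  have R': "rel A 0 = {[f 0, f 1]}" unfolding R by auto
  have "f 0 \<noteq> f 1" using f unfolding bij_betw_def inj_on_def by force
  moreover have "f 0 < 2" "f 1 < 2" using f unfolding bij_betw_def by auto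
  ultimately have "rel A 0 = {[0,1]} \<or> rel A 0 = {[1,0]}" unfolding R' by (auto simp: less_2_cases_iff)
  moreover have "\<forall>i\<ge>1. rel A i = {}" using s(1) by (simp add: is_structure_def)
  ultimately have "rel A = rel A1 \<or> rel A = rel A2"
    by (auto simp: A1_def A2_def rel_def fun_eq_iff)
  moreover have "A = (univ A, rel A)" by (simp add: univ_def rel_def)
  ultimately show ?thesis using u by (cases A) (auto simp: A1_def A2_def univ_def rel_def)
qed

lemma PP_eq: "PP = {A1, A2}"
  using PP_cases succ_A1 succ_A2 by (auto simp: PP_def A1_def A2_def univ_def)

lemma encPP: "encode [2] ` PP = {w1, w2}"
  by (simp add: PP_eq enc1 enc2)

lemma w12: "w1 \<noteq> w2" by (simp add: w1_def w2_def)

lemma inP: "problem_in_P [2] PP"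
  unfolding problem_in_P_def in_P_def encPP
proof (intro exI conjI)
  show "tm_finite 12 3 dlt" by (simp add: tm_finite_def dlt_def nxt_def)
  show "poly_time_decides dlt {w1, w2}"
    unfolding poly_time_decides_def
    using w12 by (intro exI[of _ 9] exI[of _ 0] allI) (auto intro!: exI[of _ 9] simp: run9)
qed

lemma atom_eq:
  assumes "wf_atom [2] sar k a" "\<forall>i<k. v i < (1::nat)"
  shows "eval_atom A1 S v a = eval_atom B0 (\<lambda>j. S j \<inter> tuples 1 (sar ! j)) v a"
  using assms
proof (cases a)
  case (InRel i xs)
  have "map v xs \<noteq> [0,1]"
  proof
    assume "map v xs = [0,1]"
    hence "1 \<in> set (map v xs)" by simp
    then obtain x where "x \<in> set xs" "v x = 1" by auto
    thus False using assms InRel by auto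
  qed
  thus ?thesis using InRel assms by (auto simp: A1_def B0_def rel_def)
next
  case (SoRel j xs)
  have "map v xs \<in> tuples 1 (sar ! j)" using assms SoRel by (auto simp: tuples_def)
  thus ?thesis using SoRel by auto
qed auto

lemma sat_down:
  assumes "esouh_sentence [2] \<phi>" "satisfies A1 \<phi>" shows "satisfies B0 \<phi>"
proof (cases \<phi>)
  case (ESOUH sar k M)
  from assms(2) ESOUH obtain S where
    S: "\<forall>v. (\<forall>i < k. v i < univ A1) \<longrightarrow> (\<forall>C \<in> set M. \<exists>l \<in> set C. eval_lit A1 S v l)" by auto
  define S' where "S' = (\<lambda>j. S j \<inter> tuples 1 (sar ! j))"
  have "\<forall>v. (\<forall>i < k. v i < univ B0) \<longrightarrow> (\<forall>C \<in> set M. \<exists>l \<in> set C. eval_lit B0 S' v l)"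
  proof (intro allI impI ballI)
    fix v C assume v: "\<forall>i < k. v i < univ B0" and C: "C \<in> set M"
    have v1: "\<forall>i<k. v i < (1::nat)" using v by (simp add: B0_def univ_def)
    hence "\<forall>i < k. v i < univ A1" by (auto simp: A1_def univ_def)
    with S C obtain l where l: "l \<in> set C" "eval_lit A1 S v l" by blast
    have wf: "wf_atom [2] sar k (lit_atom l)" using assms(1) ESOUH C l(1) by auto
    have "eval_lit B0 S' v l"
      using l(2) wf atom_eq[OF _ v1, of sar "lit_atom l" S] unfolding S'_def
      by (cases l) auto
    thus "\<exists>l \<in> set C. eval_lit B0 S' v l" using l(1) by blast
  qed
  moreover have "\<forall>j < length sar. S' j \<subseteq> tuples (univ B0) (sar ! j)"
    by (auto simp: S'_def B0_def univ_def)
  ultimately show ?thesis using ESOUH by auto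
qed

theorem theorem1:
  shows "\<exists>ar s \<Pi>. s < length ar \<and> ar ! s = 2 \<and> decision_problem ar s \<Pi> \<and>
           problem_in_P ar \<Pi> \<and>
           \<not> (\<exists>\<phi>. esouh_sentence ar \<phi> \<and> expresses ar s \<phi> \<Pi>)"
proof (intro exI conjI)
  show "0 < length [2::nat]" by simp
  show "[2::nat] ! 0 = 2" by simp
  show "decision_problem [2] 0 PP"
    unfolding decision_problem_def by (auto simp: PP_def isomorphic_def)
  show "problem_in_P [2] PP" by (rule inP)
  show "\<not> (\<exists>\<phi>. esouh_sentence [2] \<phi> \<and> expresses [2] 0 \<phi> PP)"
  proof
    assume "\<exists>\<phi>. esouh_sentence [2] \<phi> \<and> expresses [2] 0 \<phi> PP"
    then obtain \<phi> where e: "esouh_sentence [2] \<phi>" "expresses [2] 0 \<phi> PP" by blast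
    have "A1 \<in> PP" by (simp add: PP_eq)
    hence "satisfies A1 \<phi>" using e(2) succ_A1 unfolding expresses_def by blast
    hence "satisfies B0 \<phi>" by (rule sat_down[OF e(1)])
    hence "B0 \<in> PP" using e(2) succ_B0 unfolding expresses_def by blast
    thus False by (simp add: PP_def B0_def univ_def)
  qed
qed

end
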